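(* Let $\Phi_1,\Phi_2$ be simple point processes on $\mathbb{R}^d$ with $\sigma$-finite $k$-th moment measures for all $k\ge1$, and let $\alpha_j^{(k)}$ denote the $k$-th factorial moment measure of $\Phi_j$. If $\alpha_1^{(k)}(\cdot)\le\alpha_2^{(k)}(\cdot)$ for all $k\ge1$, then $\underline r_c(\Phi_1)\ge\underline r_c(\Phi_2)$. Moreover, for a stationary, $\alpha$-weakly sub-Poisson point process $\Phi$ of unit intensity, $\theta_d\,\underline r_c(\Phi)^d\ge1$, where $\theta_d$ is the volume of the unit ball in $\mathbb{R}^d$.
   Context: Let $W_m=[-m,m]^d$. For a point process $\Phi$ and $r>0$, let $N_{m,k}(\Phi,r)$ be the number of ordered $k$-tuples $(X_1,\dots,X_k)$ of distinct points of $\Phi\cap W_m$ with $|X_1|\le r$, $\inf_{x\in\partial W_m}|x-X_k|\le r$ and $|X_{i+1}-X_i|\le r$ for $1\le i\le k-1$ (self-avoiding paths of length $k$ from the origin to $\partial W_m$ in the Boolean model $\bigcup_{X\in\Phi}B_X(r)$), and $N_m(\Phi,r)=\sum_{k\ge1}N_{m,k}(\Phi,r)$. The lower critical radius is $\underline r_c(\Phi)=\inf\{r:\liminf_m\mathbb{E}N_m(\Phi,r)>0\}$. With mean measure $\alpha$ and factorial moment measures $\alpha^{(k)}$, $\Phi$ is $\alpha$-weakly sub-Poisson if $\alpha^{(k)}(B_1\times\dots\times B_k)\le\prod_{i=1}^k\alpha(B_i)$ for all $k$ and mutually disjoint bounded Borel $B_i$. *)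

theory Defs
  imports "HOL-Probability.Probability"
begin

definition ecount :: "'a set \<Rightarrow> ennreal" where
  "ecount A = (if finite A then of_nat (card A) else \<infinity>)"

definition simple_point_process :: "'a measure \<Rightarrow> ('a \<Rightarrow> ('d::euclidean_space) set) \<Rightarrow> bool" where
  "simple_point_process M \<Phi> \<longleftrightarrow>
     prob_space M \<and>
     (\<forall>\<omega>\<in>space M. \<forall>B. bounded B \<longrightarrow> finite (\<Phi> \<omega> \<inter> B)) \<and>
     (\<forall>B\<in>sets borel. (\<lambda>\<omega>. ecount (\<Phi> \<omega> \<inter> B)) \<in> borel_measurable M)"

definition tuple_space :: "nat \<Rightarrow> (nat \<Rightarrow> 'd::euclidean_space) measure" where
  "tuple_space k = PiM {..<k} (\<lambda>_. borel)"

definition distinct_tuples :: "nat \<Rightarrow> 'd set \<Rightarrow> (nat \<Rightarrow> 'd) set" where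
  "distinct_tuples k S = {x \<in> PiE {..<k} (\<lambda>_. S). inj_on x {..<k}}"

definition mean_measure :: "'a measure \<Rightarrow> ('a \<Rightarrow> 'd set) \<Rightarrow> 'd set \<Rightarrow> ennreal" where
  "mean_measure M \<Phi> B = (\<integral>\<^sup>+ \<omega>. ecount (\<Phi> \<omega> \<inter> B) \<partial>M)"

definition moment_measure :: "'a measure \<Rightarrow> ('a \<Rightarrow> 'd set) \<Rightarrow> nat \<Rightarrow> (nat \<Rightarrow> 'd) set \<Rightarrow> ennreal" where
  "moment_measure M \<Phi> k C = (\<integral>\<^sup>+ \<omega>. ecount (PiE {..<k} (\<lambda>_. \<Phi> \<omega>) \<inter> C) \<partial>M)"

definition factorial_moment_measure :: "'a measure \<Rightarrow> ('a \<Rightarrow> 'd set) \<Rightarrow> nat \<Rightarrow> (nat \<Rightarrow> 'd) set \<Rightarrow> ennreal" where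
  "factorial_moment_measure M \<Phi> k C = (\<integral>\<^sup>+ \<omega>. ecount (distinct_tuples k (\<Phi> \<omega>) \<inter> C) \<partial>M)"

definition sigma_finite_moments :: "'a measure \<Rightarrow> ('a \<Rightarrow> ('d::euclidean_space) set) \<Rightarrow> bool" where
  "sigma_finite_moments M \<Phi> \<longleftrightarrow>
     (\<forall>k\<ge>1. \<exists>A::nat \<Rightarrow> (nat \<Rightarrow> 'd) set.
        range A \<subseteq> sets (tuple_space k) \<and> \<Union>(range A) = space (tuple_space k) \<and>
        (\<forall>i. moment_measure M \<Phi> k (A i) < \<infinity>))"

definition window :: "nat \<Rightarrow> 'd::euclidean_space set" where
  "window m = cbox (- (real m *\<^sub>R One)) (real m *\<^sub>R One)"

definition path_count :: "nat \<Rightarrow> nat \<Rightarrow> 'd::euclidean_space set \<Rightarrow> real \<Rightarrow> ennreal" where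
  "path_count m k S r = ecount {x \<in> distinct_tuples k (S \<inter> window m).
      norm (x 0) \<le> r \<and> infdist (x (k - 1)) (frontier (window m)) \<le> r \<and>
      (\<forall>i. Suc i < k \<longrightarrow> dist (x (Suc i)) (x i) \<le> r)}"

definition expected_paths :: "'a measure \<Rightarrow> ('a \<Rightarrow> 'd::euclidean_space set) \<Rightarrow> nat \<Rightarrow> real \<Rightarrow> ennreal" where
  "expected_paths M \<Phi> m r = (\<integral>\<^sup>+ \<omega>. (\<Sum>k. path_count m (Suc k) (\<Phi> \<omega>) r) \<partial>M)"

text \<open>Lower critical radius (infimum of the empty set is +infinity).\<close>
definition lower_crit_radius :: "'a measure \<Rightarrow> ('a \<Rightarrow> 'd::euclidean_space set) \<Rightarrow> ereal" where
  "lower_crit_radius M \<Phi> =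
     Inf {ereal r | r. r > 0 \<and> liminf (\<lambda>m. expected_paths M \<Phi> m r) > 0}"

definition config_space :: "'d::euclidean_space set measure" where
  "config_space = sigma UNIV {{A. ecount (A \<inter> B) = c} | B c. B \<in> sets borel}"

definition stationary :: "'a measure \<Rightarrow> ('a \<Rightarrow> 'd::euclidean_space set) \<Rightarrow> bool" where
  "stationary M \<Phi> \<longleftrightarrow>
     (\<forall>v. distr M config_space (\<lambda>\<omega>. (\<lambda>x. x + v) ` \<Phi> \<omega>) = distr M config_space \<Phi>)"

definition weakly_sub_poisson :: "'a measure \<Rightarrow> ('a \<Rightarrow> 'd::euclidean_space set) \<Rightarrow> bool" where
  "weakly_sub_poisson M \<Phi> \<longleftrightarrow>
     (\<forall>k B. (\<forall>i<k. B i \<in> sets borel \<and> bounded (B i)) \<and> disjoint_family_on B {..<k} \<longrightarrow>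
        factorial_moment_measure M \<Phi> k (PiE {..<k} B) \<le> (\<Prod>i<k. mean_measure M \<Phi> (B i)))"

end

theory Submission
  imports Defs
begin




lemma ecount_eq: "ecount A = emeasure (count_space UNIV) A"
  by (simp add: ecount_def emeasure_count_space)

lemma ecount_mono: "A \<subseteq> B \<Longrightarrow> ecount A \<le> ecount B"
  unfolding ecount_eq by (rule emeasure_mono) auto

lemma space_tuple: "space (tuple_space k) = PiE {..<k} (\<lambda>_. UNIV)"
  by (simp add: tuple_space_def space_PiM)

lemma ecount_PiE_finite:
  assumes "\<And>i. i \<in> I \<Longrightarrow> finite (F i)" "finite I"
  shows "ecount (PiE I F) = (\<Prod>i\<in>I. ecount (F i))"
  using assms by (simp add: ecount_def finite_PiE card_PiE)

lemma count_tuples_measurable: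
  fixes W :: "'d::euclidean_space set" and \<Phi> :: "'a \<Rightarrow> 'd set"
  assumes spp: "simple_point_process M \<Phi>" and W: "bounded W" "W \<in> sets borel"
    and C: "C \<in> sets (tuple_space k)"
  shows "(\<lambda>\<omega>. ecount (PiE {..<k} (\<lambda>_. \<Phi> \<omega>) \<inter> C \<inter> PiE {..<k} (\<lambda>_. W))) \<in> borel_measurable M"
proof -
  have fin: "finite (\<Phi> \<omega> \<inter> B)" if "\<omega> \<in> space M" "B \<subseteq> W" for \<omega> B
  proof -
    have "finite (\<Phi> \<omega> \<inter> W)" using spp W that unfolding simple_point_process_def by blast
    then show ?thesis using that by (meson finite_subset inf_mono order_refl)
  qed
  have cmeas: "(\<lambda>\<omega>. ecount (\<Phi> \<omega> \<inter> B)) \<in> borel_measurable M" if "B \<in> sets borel" for B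
    using spp that unfolding simple_point_process_def by blast
  let ?\<Omega> = "PiE {..<k} (\<lambda>_. space (borel :: 'd measure))"
  have "C \<in> sigma_sets ?\<Omega> (prod_algebra {..<k} (\<lambda>_. borel))"
    using C by (simp add: tuple_space_def sets_PiM)
  then show ?thesis
  proof (induction C rule: sigma_sets_induct_disjoint[OF Int_stable_prod_algebra prod_algebra_sets_into_space, consumes 1, case_names basic empty compl union])

    case (basic A)
    then obtain X where A: "A = PiE {..<k} X" and X: "X \<in> (\<Pi> j\<in>{..<k}. sets borel)"
      by (auto simp: prod_algebra_eq_finite)
    have eq: "PiE {..<k} (\<lambda>_. \<Phi> \<omega>) \<inter> A \<inter> PiE {..<k} (\<lambda>_. W) = PiE {..<k} (\<lambda>i. \<Phi> \<omega> \<inter> (X i \<inter> W))" for \<omega>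
      by (auto simp: A PiE_iff)
    have "(\<lambda>\<omega>. \<Prod>i<k. ecount (\<Phi> \<omega> \<inter> (X i \<inter> W))) \<in> borel_measurable M"
      using X W by (intro borel_measurable_prod_ennreal cmeas) auto
    then show ?case
      by (rule measurable_cong[THEN iffD1, rotated])
         (auto simp: eq intro!: ecount_PiE_finite[symmetric] fin)
  next
    case empty then show ?case by simp
  next
    case (compl A)
    have eq: "PiE {..<k} (\<lambda>_. \<Phi> \<omega>) \<inter> (PiE {..<k} (\<lambda>_. UNIV) - A) \<inter> PiE {..<k} (\<lambda>_. W) =
       PiE {..<k} (\<lambda>_. \<Phi> \<omega> \<inter> W) - (PiE {..<k} (\<lambda>_. \<Phi> \<omega>) \<inter> A \<inter> PiE {..<k} (\<lambda>_. W))" for \<omega>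
      by (auto simp: PiE_iff)
    have e2: "ecount (PiE {..<k} (\<lambda>_. \<Phi> \<omega> \<inter> W) - (PiE {..<k} (\<lambda>_. \<Phi> \<omega>) \<inter> A \<inter> PiE {..<k} (\<lambda>_. W)))
       = ecount (PiE {..<k} (\<lambda>_. \<Phi> \<omega> \<inter> W)) - ecount (PiE {..<k} (\<lambda>_. \<Phi> \<omega>) \<inter> A \<inter> PiE {..<k} (\<lambda>_. W))"
      if "\<omega> \<in> space M" for \<omega>
    proof -
      have f: "finite (PiE {..<k} (\<lambda>_. \<Phi> \<omega> \<inter> W))" using fin[OF that] by (simp add: finite_PiE)
      have s: "PiE {..<k} (\<lambda>_. \<Phi> \<omega>) \<inter> A \<inter> PiE {..<k} (\<lambda>_. W) \<subseteq> PiE {..<k} (\<lambda>_. \<Phi> \<omega> \<inter> W)"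
        by (auto simp: PiE_iff)
      then have f2: "finite (PiE {..<k} (\<lambda>_. \<Phi> \<omega>) \<inter> A \<inter> PiE {..<k} (\<lambda>_. W))" using f finite_subset by blast
      show ?thesis using f f2 s unfolding ecount_def
        by (simp add: card_Diff_subset of_nat_diff ennreal_of_nat_eq_real_of_nat ennreal_minus card_mono)
    qed
    have m1: "(\<lambda>\<omega>. ecount (PiE {..<k} (\<lambda>_. \<Phi> \<omega> \<inter> W))) \<in> borel_measurable M"
    proof -
      have "(\<lambda>\<omega>. \<Prod>i<k. ecount (\<Phi> \<omega> \<inter> W)) \<in> borel_measurable M"
        using W by (intro borel_measurable_prod_ennreal cmeas) auto
      moreover have "(\<Prod>i<k. ecount (\<Phi> w \<inter> W)) = ecount (PiE {..<k} (\<lambda>_. \<Phi> w \<inter> W))"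
        if w: "w \<in> space M" for w
        by (rule ecount_PiE_finite[symmetric]) (auto intro: fin[OF w])
      ultimately show ?thesis
        by (rule measurable_cong[THEN iffD1, rotated]) 
    qed
    have "(\<lambda>\<omega>. ecount (PiE {..<k} (\<lambda>_. \<Phi> \<omega> \<inter> W)) - ecount (PiE {..<k} (\<lambda>_. \<Phi> \<omega>) \<inter> A \<inter> PiE {..<k} (\<lambda>_. W))) \<in> borel_measurable M"
      using m1 compl.IH by measurable
    moreover have "ecount (PiE {..<k} (\<lambda>_. \<Phi> w \<inter> W)) - ecount (PiE {..<k} (\<lambda>_. \<Phi> w) \<inter> A \<inter> PiE {..<k} (\<lambda>_. W))
       = ecount (PiE {..<k} (\<lambda>_. \<Phi> w) \<inter> (PiE {..<k} (\<lambda>_. space borel) - A) \<inter> PiE {..<k} (\<lambda>_. W))"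
      if "w \<in> space M" for w
      unfolding space_borel by (subst eq) (rule e2[OF that, symmetric])
    ultimately show ?case
      by (rule measurable_cong[THEN iffD1, rotated])
  next
    case (union A)
    have eq: "PiE {..<k} (\<lambda>_. \<Phi> \<omega>) \<inter> (\<Union>i. A i) \<inter> PiE {..<k} (\<lambda>_. W) =
        (\<Union>i. PiE {..<k} (\<lambda>_. \<Phi> \<omega>) \<inter> A i \<inter> PiE {..<k} (\<lambda>_. W))" for \<omega> by auto
    have e2: "ecount (\<Union>i. PiE {..<k} (\<lambda>_. \<Phi> \<omega>) \<inter> A i \<inter> PiE {..<k} (\<lambda>_. W)) =
        (\<Sum>i. ecount (PiE {..<k} (\<lambda>_. \<Phi> \<omega>) \<inter> A i \<inter> PiE {..<k} (\<lambda>_. W)))" for \<omega>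
      unfolding ecount_eq
      by (rule suminf_emeasure[symmetric]) (use union.hyps(1) in \<open>auto simp: disjoint_family_on_def\<close>)
    have "(\<lambda>\<omega>. \<Sum>i. ecount (PiE {..<k} (\<lambda>_. \<Phi> \<omega>) \<inter> A i \<inter> PiE {..<k} (\<lambda>_. W))) \<in> borel_measurable M"
      by (rule borel_measurable_suminf_order) (rule union.IH)
    then show ?case by (simp only: eq e2)
  qed
qed



lemma infdist_meas[measurable]:
  "f \<in> borel_measurable M \<Longrightarrow> (\<lambda>x. infdist (f x) (F::'d::euclidean_space set)) \<in> borel_measurable M"
  by (rule borel_measurable_continuous_on[where f="\<lambda>x. infdist x F"])
     (auto intro: continuous_on_infdist continuous_on_id)

lemma window_borel[measurable]: "window m \<in> sets borel"
  unfolding window_def by simp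

lemma comp_meas: "i < k \<Longrightarrow> (\<lambda>x. x i) \<in> borel_measurable (PiM {..<k} (\<lambda>_. borel::'d::euclidean_space measure))"
  by (rule measurable_component_singleton) simp

lemma pred_neq: assumes "i < k" "j < k"
  shows "Measurable.pred (PiM {..<k} (\<lambda>_. borel)) (\<lambda>x. x i \<noteq> (x j::'d::euclidean_space))"
proof -
  note [measurable] = comp_meas[OF assms(1)] comp_meas[OF assms(2)]
  have "Measurable.pred (PiM {..<k} (\<lambda>_. borel)) (\<lambda>x. x i = (x j::'d::euclidean_space))"
    unfolding pred_def by (rule measurable_equality_set) measurable
  then show ?thesis by (rule pred_intros_logic)
qed

lemma pred_neq': "i \<in> {..<k} \<Longrightarrow> j \<in> {..<k} \<Longrightarrow> Measurable.pred (PiM {..<k} (\<lambda>_. borel)) (\<lambda>x. i \<noteq> j \<longrightarrow> x i \<noteq> (x j::'d::euclidean_space))"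
  using pred_neq[of i k j] by (cases "i = j") auto

lemma inj_pred: "Measurable.pred (PiM {..<k::nat} (\<lambda>_. borel)) (\<lambda>x. \<forall>i\<in>{..<k}. \<forall>j\<in>{..<k}. i \<noteq> j \<longrightarrow> x i \<noteq> (x j::'d::euclidean_space))"
  by (intro pred_intros_finite pred_neq') auto

lemma path_pred:
  fixes k::nat and F :: "'d::euclidean_space set" and r :: real
  shows "Measurable.pred (PiM {..<Suc k} (\<lambda>_. borel)) (\<lambda>x. (\<forall>i\<in>{..<Suc k}. x i \<in> window m) \<and> norm (x 0) \<le> r \<and> infdist (x k :: 'd) F \<le> r
    \<and> (\<forall>i\<in>{..<k}. dist (x (Suc i)) (x i) \<le> r))"
proof -
  note [measurable] = comp_meas[of 0 "Suc k"] comp_meas[of k "Suc k"]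
  have a: "Measurable.pred (PiM {..<Suc k} (\<lambda>_. borel)) (\<lambda>x. \<forall>i\<in>{..<Suc k}. x i \<in> (window m::'d set))"
    apply (rule pred_intros_finite(3), simp)
    apply (rule pred_sets2[OF window_borel comp_meas], simp)
    done
  have b: "Measurable.pred (PiM {..<Suc k} (\<lambda>_. borel)) (\<lambda>x. \<forall>i\<in>{..<k}. dist (x (Suc i)) (x i :: 'd) \<le> r)"
  proof (rule pred_intros_finite(3), simp)
    fix i assume "i \<in> {..<k}"
    then have "i < Suc k" "Suc i < Suc k" by auto
    note [measurable] = comp_meas[OF this(1)] comp_meas[OF this(2)]
    show "Measurable.pred (PiM {..<Suc k} (\<lambda>_. borel)) (\<lambda>x. dist (x (Suc i)) (x i :: 'd) \<le> r)"
      by measurable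
  qed
  show ?thesis using a b by measurable
qed


definition inj_set :: "nat \<Rightarrow> (nat \<Rightarrow> 'd::euclidean_space) set" where
  "inj_set k = {x \<in> space (tuple_space k). \<forall>i\<in>{..<k}. \<forall>j\<in>{..<k}. i \<noteq> j \<longrightarrow> x i \<noteq> x j}"

definition path_set :: "nat \<Rightarrow> nat \<Rightarrow> real \<Rightarrow> (nat \<Rightarrow> 'd::euclidean_space) set" where
  "path_set m k r = {x \<in> space (tuple_space (Suc k)). (\<forall>i\<in>{..<Suc k}. x i \<in> window m) \<and> norm (x 0) \<le> r
     \<and> infdist (x k) (frontier (window m)) \<le> r \<and> (\<forall>i\<in>{..<k}. dist (x (Suc i)) (x i) \<le> r)}"

lemma inj_set_sets: "inj_set k \<in> sets (tuple_space k)"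
  using inj_pred[of k] unfolding inj_set_def tuple_space_def pred_def .

lemma path_set_sets: "path_set m k r \<in> sets (tuple_space (Suc k))"
  using path_pred[of k m r "frontier (window m)"] unfolding path_set_def tuple_space_def pred_def .

lemma distinct_tuples_eq: "distinct_tuples k S = PiE {..<k} (\<lambda>_. S) \<inter> inj_set k"
  unfolding distinct_tuples_def inj_set_def space_tuple inj_on_def by (auto simp: PiE_iff extensional_def)

lemma path_count_eq: "path_count m (Suc k) S r = ecount (distinct_tuples (Suc k) S \<inter> path_set m k r)"
proof -
  have "{x \<in> distinct_tuples (Suc k) (S \<inter> window m).
      norm (x 0) \<le> r \<and> infdist (x (Suc k - 1)) (frontier (window m)) \<le> r \<and>
      (\<forall>i. Suc i < Suc k \<longrightarrow> dist (x (Suc i)) (x i) \<le> r)} = distinct_tuples (Suc k) S \<inter> path_set m k r"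
    unfolding distinct_tuples_def path_set_def space_tuple by (auto simp: PiE_iff)
  then show ?thesis unfolding path_count_def by simp
qed

lemma dt_meas:
  fixes W :: "'d::euclidean_space set" and \<Phi> :: "'a \<Rightarrow> 'd set"
  assumes spp: "simple_point_process M \<Phi>" and W: "bounded W" "W \<in> sets borel"
    and C: "C \<in> sets (tuple_space k)" "C \<subseteq> PiE {..<k} (\<lambda>_. W)"
  shows "(\<lambda>\<omega>. ecount (distinct_tuples k (\<Phi> \<omega>) \<inter> C)) \<in> borel_measurable M"
proof -
  have "distinct_tuples k (\<Phi> \<omega>) \<inter> C = PiE {..<k} (\<lambda>_. \<Phi> \<omega>) \<inter> (C \<inter> inj_set k) \<inter> PiE {..<k} (\<lambda>_. W)" for \<omega>
    using C(2) by (auto simp: distinct_tuples_eq)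
  moreover have "C \<inter> inj_set k \<in> sets (tuple_space k)" using C(1) inj_set_sets by auto
  ultimately show ?thesis using count_tuples_measurable[OF spp W] by simp
qed

lemma window_bounded: "bounded (window m)"
  unfolding window_def by simp

lemma path_set_sub: "path_set m k r \<subseteq> PiE {..<Suc k} (\<lambda>_. window m)"
  unfolding path_set_def space_tuple by (auto simp: PiE_iff extensional_def)

lemma expected_paths_eq:
  assumes spp: "simple_point_process M \<Phi>"
  shows "expected_paths M \<Phi> m r = (\<Sum>k. factorial_moment_measure M \<Phi> (Suc k) (path_set m k r))"
  unfolding expected_paths_def factorial_moment_measure_def path_count_eq
  by (rule nn_integral_suminf, rule dt_meas[OF spp window_bounded window_borel path_set_sets path_set_sub])

lemma part1:
  fixes \<Phi>1 :: "'a \<Rightarrow> 'd::euclidean_space set" and \<Phi>2 :: "'b \<Rightarrow> 'd set"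
  assumes "simple_point_process M1 \<Phi>1" "simple_point_process M2 \<Phi>2"
   and le: "\<forall>k\<ge>1. \<forall>C\<in>sets (tuple_space k).
          factorial_moment_measure M1 \<Phi>1 k C \<le> factorial_moment_measure M2 \<Phi>2 k C"
  shows "lower_crit_radius M1 \<Phi>1 \<ge> lower_crit_radius M2 \<Phi>2"
proof -
  have "expected_paths M1 \<Phi>1 m r \<le> expected_paths M2 \<Phi>2 m r" for m r
    unfolding expected_paths_eq[OF assms(1)] expected_paths_eq[OF assms(2)]
    by (intro suminf_le summableI) (simp add: le[rule_format] path_set_sets)
  then have "liminf (\<lambda>m. expected_paths M1 \<Phi>1 m r) \<le> liminf (\<lambda>m. expected_paths M2 \<Phi>2 m r)" for r
    by (intro Liminf_mono) auto
  then have "{ereal r | r. r > 0 \<and> liminf (\<lambda>m. expected_paths M1 \<Phi>1 m r) > 0}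
      \<subseteq> {ereal r | r. r > 0 \<and> liminf (\<lambda>m. expected_paths M2 \<Phi>2 m r) > 0}"
    using order_less_le_trans by blast
  then show ?thesis unfolding lower_crit_radius_def by (rule Inf_superset_mono)
qed





definition sc :: "real \<Rightarrow> nat \<Rightarrow> real" where "sc s n = s / 2 ^ n"

definition qv :: "real \<Rightarrow> nat \<Rightarrow> 'd::euclidean_space \<Rightarrow> 'd" where
  "qv s n z = (\<Sum>b\<in>Basis. of_int \<lfloor>(z \<bullet> b) / sc s n\<rfloor> *\<^sub>R b)"

lemma qv_inner: "b \<in> Basis \<Longrightarrow> qv s n z \<bullet> b = of_int \<lfloor>(z \<bullet> b) / sc s n\<rfloor>"
  unfolding qv_def by (simp add: inner_sum_left inner_Basis if_distrib cong: if_cong)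

lemma qv_eq_iff: "qv s n z = qv s n z' \<longleftrightarrow> (\<forall>b\<in>Basis. \<lfloor>(z \<bullet> b) / sc s n\<rfloor> = \<lfloor>(z' \<bullet> b) / sc s n\<rfloor>)"
  by (simp add: euclidean_eq_iff[of "qv s n z"] qv_inner)

lemma floor_div_pow: "\<lfloor>(y::real) / of_int N\<rfloor> = \<lfloor>y\<rfloor> div N" if "N > 0"
proof -
  have "\<lfloor>y / of_int N\<rfloor> = \<lfloor>of_int \<lfloor>y\<rfloor> / (of_int N :: real)\<rfloor>"
  proof (rule floor_unique)
    let ?a = "\<lfloor>of_int \<lfloor>y\<rfloor> / (of_int N :: real)\<rfloor>"
    have "of_int ?a \<le> of_int \<lfloor>y\<rfloor> / (of_int N :: real)" by (rule of_int_floor_le)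
    also have "\<dots> \<le> y / of_int N" using that by (simp add: divide_right_mono)
    finally show "of_int ?a \<le> y / of_int N" .
    have h: "of_int \<lfloor>y\<rfloor> / (of_int N :: real) < of_int ?a + 1" by linarith
    have Npos: "(0::real) < of_int N" using that by simp
    have "of_int \<lfloor>y\<rfloor> < (of_int ?a + 1) * (of_int N :: real)" using mult_strict_right_mono[OF h Npos] Npos by simp
    then have "\<lfloor>y\<rfloor> < (?a + 1) * N" by (metis of_int_less_iff of_int_mult of_int_add of_int_1)
    then have "\<lfloor>y\<rfloor> + 1 \<le> (?a + 1) * N" by linarith
    then have "y < of_int ((?a + 1) * N)" by (metis floor_less_iff le_less_trans less_add_one of_int_floor_le not_le)
    then show "y / of_int N < of_int ?a + 1" using that by (simp add: divide_less_eq)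
  qed
  also have "\<dots> = \<lfloor>y\<rfloor> div N" by (rule floor_divide_of_int_eq)
  finally show ?thesis .
qed

lemma sc_rel: "m \<le> n \<Longrightarrow> sc s m = sc s n * 2 ^ (n - m)"
  unfolding sc_def by (simp add: power_diff)

lemma qv_refine:
  assumes "s > 0" "m \<le> n" "qv s n z = qv s n z'"
  shows "qv s m z = qv s m z'"
proof -
  have key: "\<lfloor>(t::real) / sc s m\<rfloor> = \<lfloor>t / sc s n\<rfloor> div 2 ^ (n - m)" for t
  proof -
    have "t / sc s m = (t / sc s n) / of_int (2 ^ (n - m))"
      using sc_rel[OF assms(2), of s] by (simp only: of_int_power of_int_numeral divide_divide_eq_left)
    then have "\<lfloor>t / sc s m\<rfloor> = \<lfloor>(t / sc s n) / of_int (2 ^ (n - m))\<rfloor>" by (simp only:)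
    also have "\<dots> = \<lfloor>t / sc s n\<rfloor> div 2 ^ (n - m)" by (rule floor_div_pow) simp
    finally show ?thesis .
  qed
  show ?thesis using assms(3) unfolding qv_eq_iff key by simp
qed

lemma l1: "\<lfloor>(a::real) / h\<rfloor> = \<lfloor>b / h\<rfloor> \<Longrightarrow> \<bar>a / h - b / h\<bar> < 1"
proof -
  assume e: "\<lfloor>a / h\<rfloor> = \<lfloor>b / h\<rfloor>"
  have f1: "of_int \<lfloor>a / h\<rfloor> \<le> a / h" "a / h < of_int \<lfloor>a / h\<rfloor> + 1" by (rule of_int_floor_le, rule real_of_int_floor_add_one_gt)
  have f2: "of_int \<lfloor>b / h\<rfloor> \<le> b / h" "b / h < of_int \<lfloor>b / h\<rfloor> + 1" by (rule of_int_floor_le, rule real_of_int_floor_add_one_gt)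
  show ?thesis using f1 f2 e by linarith
qed
lemma l2: "\<bar>(a::real) / h - b / h\<bar> < 1 \<Longrightarrow> h > 0 \<Longrightarrow> \<bar>a - b\<bar> < h"
proof -
  assume a: "\<bar>(a::real) / h - b / h\<bar> < 1" and h: "h > 0"
  have "\<bar>a - b\<bar> = \<bar>a / h - b / h\<bar> * h" using h by (simp add: diff_divide_distrib[symmetric] abs_mult)
  also have "\<dots> < 1 * h" using a h by (intro mult_strict_right_mono) auto
  finally show ?thesis by simp
qed
lemma floor_eq_close: "\<lfloor>(a::real) / h\<rfloor> = \<lfloor>b / h\<rfloor> \<Longrightarrow> h > 0 \<Longrightarrow> \<bar>a - b\<bar> < h"
  by (rule l2[OF l1])

lemma sc_pos: "s > 0 \<Longrightarrow> sc s n > 0" unfolding sc_def by simp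
lemma sc_le: "s > 0 \<Longrightarrow> sc s n \<le> s"
proof -
  assume "s > 0"
  have "s / 2 ^ n \<le> s / 1" by (rule divide_left_mono) (use \<open>s > 0\<close> in auto)
  then show ?thesis unfolding sc_def by simp
qed

lemma qv_close:
  assumes "s > 0" "qv s n z = qv s n (z'::'d::euclidean_space)"
  shows "norm (z - z') \<le> DIM('d) * sc s n"
proof -
  have "norm (z - z') \<le> (\<Sum>b\<in>Basis. \<bar>(z - z') \<bullet> b\<bar>)" by (rule norm_le_l1)
  also have "\<dots> \<le> (\<Sum>b\<in>(Basis::'d set). sc s n)"
  proof (rule sum_mono)
    fix b :: 'd assume b: "b \<in> Basis"
    then have "\<lfloor>(z \<bullet> b) / sc s n\<rfloor> = \<lfloor>(z' \<bullet> b) / sc s n\<rfloor>" using assms(2) by (simp add: qv_eq_iff)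
    then have "\<bar>z \<bullet> b - z' \<bullet> b\<bar> < sc s n" by (rule floor_eq_close) (rule sc_pos[OF assms(1)])
    then show "\<bar>(z - z') \<bullet> b\<bar> \<le> sc s n" by (simp add: inner_diff_left)
  qed
  finally show ?thesis by simp
qed

lemma qv_eventually_diff:
  assumes "s > 0" "z \<noteq> (z'::'d::euclidean_space)"
  shows "eventually (\<lambda>n. qv s n z \<noteq> qv s n z') sequentially"
proof -
  obtain b where b: "b \<in> Basis" "z \<bullet> b \<noteq> z' \<bullet> b" using assms(2) euclidean_eq_iff by blast
  define \<delta> where "\<delta> = \<bar>z \<bullet> b - z' \<bullet> b\<bar>"
  have \<delta>: "\<delta> > 0" using b unfolding \<delta>_def by simp
  obtain N :: nat where N: "s / \<delta> < N" using reals_Archimedean2 by blast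
  have "N < (2::real) ^ N" by (rule of_nat_less_two_power)
  then have "s / \<delta> < 2 ^ N" using N by linarith
  then have "sc s N < \<delta>" using \<delta> unfolding sc_def by (simp add: divide_less_eq mult.commute)
  have "qv s N z \<noteq> qv s N z'"
  proof
    assume "qv s N z = qv s N z'"
    from qv_close[OF assms(1) this] have "norm (z - z') \<le> DIM('d) * sc s N" .
    have "\<lfloor>(z \<bullet> b) / sc s N\<rfloor> = \<lfloor>(z' \<bullet> b) / sc s N\<rfloor>" using \<open>qv s N z = qv s N z'\<close> b by (simp add: qv_eq_iff)
    then have "\<bar>z \<bullet> b - z' \<bullet> b\<bar> < sc s N" by (rule floor_eq_close) (rule sc_pos[OF assms(1)])
    then show False using \<open>sc s N < \<delta>\<close> \<delta>_def by simp
  qed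
  show ?thesis
  proof (rule eventually_sequentiallyI[of N])
    fix n assume "N \<le> n"
    show "qv s n z \<noteq> qv s n z'"
      using qv_refine[OF assms(1) \<open>N \<le> n\<close>, of z z'] \<open>qv s N z \<noteq> qv s N z'\<close> by blast
  qed
qed

lemma qv_meas[measurable]: "(\<lambda>z. qv s n z) \<in> borel_measurable (borel :: 'd::euclidean_space measure)"
proof -
  have [measurable]: "(\<lambda>x. real_of_int \<lfloor>x\<rfloor>) \<in> borel_measurable (borel :: real measure)"
    by (rule borel_measurable_real_floor)
  show ?thesis unfolding qv_def by measurable
qed

definition sep :: "real \<Rightarrow> nat \<Rightarrow> nat \<Rightarrow> (nat \<Rightarrow> 'd::euclidean_space) \<Rightarrow> bool" where
  "sep s k n x = (\<forall>i\<in>{..<k}. \<forall>j\<in>{..<k}. i \<noteq> j \<longrightarrow> qv s n (x i) \<noteq> qv s n (x j))"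

definition Yset :: "real \<Rightarrow> nat \<Rightarrow> nat \<Rightarrow> (nat \<Rightarrow> 'd::euclidean_space) set" where
  "Yset s k n = {x \<in> space (tuple_space k). sep s k n x \<and> (\<forall>m\<in>{..<n}. \<not> sep s k m x)}"

definition Rset :: "real \<Rightarrow> nat \<Rightarrow> nat \<Rightarrow> (nat \<Rightarrow> 'd) \<Rightarrow> (nat \<Rightarrow> 'd::euclidean_space) set" where
  "Rset s k n c = {x \<in> Yset s k n. \<forall>i\<in>{..<k}. qv s n (x i) = c i}"

definition cube :: "real \<Rightarrow> nat \<Rightarrow> 'd \<Rightarrow> 'd::euclidean_space set" where
  "cube s n a = {z. qv s n z = a}"

lemma pred_qv_eq: assumes "i < k" "j < k"
  shows "Measurable.pred (PiM {..<k} (\<lambda>_. borel)) (\<lambda>x. qv s n (x i) = qv s n (x j::'d::euclidean_space))"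
proof -
  note [measurable] = comp_meas[OF assms(1)] comp_meas[OF assms(2)]
  show ?thesis unfolding pred_def by (rule measurable_equality_set) measurable
qed

lemma pred_qv_const: assumes "i < k"
  shows "Measurable.pred (PiM {..<k} (\<lambda>_. borel)) (\<lambda>x. qv s n (x i) = (a::'d::euclidean_space))"
proof -
  note [measurable] = comp_meas[OF assms(1)]
  show ?thesis unfolding pred_def by (rule measurable_equality_set) measurable
qed

lemma pred_sep: "Measurable.pred (PiM {..<k} (\<lambda>_. borel)) (\<lambda>x. sep s k n (x :: nat \<Rightarrow> 'd::euclidean_space))"
proof -
  have h: "Measurable.pred (PiM {..<k} (\<lambda>_. borel)) (\<lambda>x. i \<noteq> j \<longrightarrow> qv s n (x i) \<noteq> qv s n (x j::'d))"
    if "i \<in> {..<k}" "j \<in> {..<k}" for i j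
  proof (cases "i = j")
    case False
    have "Measurable.pred (PiM {..<k} (\<lambda>_. borel)) (\<lambda>x. \<not> qv s n (x i) = qv s n (x j::'d))"
      using pred_qv_eq[of i k j s n] that by (intro pred_intros_logic(2)) auto
    then show ?thesis using False by simp
  qed simp
  show ?thesis unfolding sep_def by (intro pred_intros_finite h) auto
qed

lemma Yset_sets: "Yset s k n \<in> sets (tuple_space k)"
proof -
  have "Measurable.pred (PiM {..<k} (\<lambda>_. borel)) (\<lambda>x. sep s k n (x :: nat \<Rightarrow> 'd::euclidean_space) \<and> (\<forall>m\<in>{..<n}. \<not> sep s k m x))"
    using pred_sep by (intro pred_intros_logic pred_intros_finite) auto
  then show ?thesis unfolding Yset_def tuple_space_def pred_def .
qed

lemma Rset_sets: "Rset s k n (c :: nat \<Rightarrow> 'd::euclidean_space) \<in> sets (tuple_space k)"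
proof -
  have "Measurable.pred (PiM {..<k} (\<lambda>_. borel)) (\<lambda>x. \<forall>i\<in>{..<k}. qv s n (x i) = (c i::'d::euclidean_space))"
    using pred_qv_const by (intro pred_intros_finite) auto
  then have "{x \<in> space (tuple_space k). \<forall>i\<in>{..<k}. qv s n (x i) = (c i::'d::euclidean_space)} \<in> sets (tuple_space k)"
    unfolding tuple_space_def pred_def .
  moreover have "Rset s k n c = Yset s k n \<inter> {x \<in> space (tuple_space k). \<forall>i\<in>{..<k}. qv s n (x i) = c i}"
    unfolding Rset_def Yset_def by auto
  ultimately show ?thesis using sets.Int[OF Yset_sets[of s k n]] by auto
qed

lemma cube_sets: "cube s n (a::'d::euclidean_space) \<in> sets borel"
proof -
  have "{z \<in> space borel. qv s n z = (a::'d::euclidean_space)} \<in> sets borel"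
    by (rule measurable_equality_set) measurable
  then show ?thesis unfolding cube_def by simp
qed

lemma cube_bounded: assumes "s > 0" shows "bounded (cube s n (a::'d::euclidean_space))"
proof (cases "cube s n a = {}")
  case False
  then obtain z0 where z0: "qv s n z0 = a" unfolding cube_def by auto
  have "cube s n a \<subseteq> cball z0 (DIM('d) * sc s n)"
    using qv_close[OF assms, of n z0] z0 unfolding cube_def by (auto simp: dist_norm)
  then show ?thesis using bounded_cball bounded_subset by blast
qed simp

lemma sep_same: "(\<forall>i\<in>{..<k}. qv s n (x i) = qv s n (y i)) \<Longrightarrow> sep s k n x = sep s k n y"
  unfolding sep_def by auto

lemma Rset_prod:
  assumes s: "s > 0" and x: "x \<in> Rset s k n c"
  shows "Rset s k n c = PiE {..<k} (\<lambda>i. cube s n (c i))"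
proof
  show "Rset s k n c \<subseteq> PiE {..<k} (\<lambda>i. cube s n (c i))"
    unfolding Rset_def Yset_def space_tuple cube_def by (auto simp: PiE_iff extensional_def)
next
  show "PiE {..<k} (\<lambda>i. cube s n (c i)) \<subseteq> Rset s k n c"
  proof
    fix y assume y: "y \<in> PiE {..<k} (\<lambda>i. cube s n (c i))"
    have xy: "qv s n (y i) = qv s n (x i)" if "i \<in> {..<k}" for i
      using x y that unfolding Rset_def cube_def by (auto simp: PiE_iff)
    have xym: "qv s m (y i) = qv s m (x i)" if "i \<in> {..<k}" "m \<le> n" for i m
      by (rule qv_refine[OF s that(2) xy[OF that(1)]])
    have "sep s k n y = sep s k n x" using xy by (intro sep_same) auto
    moreover have "sep s k m y = sep s k m x" if "m < n" for m using xym that by (intro sep_same) auto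
    ultimately show "y \<in> Rset s k n c" using x y
      unfolding Rset_def Yset_def cube_def space_tuple by (auto simp: PiE_iff)
  qed
qed

lemma Rset_distinct:
  assumes "x \<in> Rset s k n c" "i < k" "j < k" "i \<noteq> j" shows "c i \<noteq> c j"
proof -
  from assms(1) have "sep s k n x" "\<forall>i\<in>{..<k}. qv s n (x i) = c i" unfolding Rset_def Yset_def by auto
  then show ?thesis using assms(2-4) unfolding sep_def by (metis lessThan_iff)
qed

lemma cube_disjoint: "a \<noteq> a' \<Longrightarrow> cube s n a \<inter> cube s n a' = {}"
  unfolding cube_def by auto

lemma Yset_disj_aux: "x \<in> Yset s k n \<Longrightarrow> x \<in> Yset s k n' \<Longrightarrow> n < n' \<Longrightarrow> False"
  unfolding Yset_def by auto

lemma Yset_disj: assumes "n \<noteq> n'" shows "Yset s k n \<inter> Yset s k n' = {}"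
proof -
  have False if "x \<in> Yset s k n" "x \<in> Yset s k n'" for x
    using Yset_disj_aux[OF that] Yset_disj_aux[OF that(2,1)] assms by (cases "n < n'") auto
  then show ?thesis by blast
qed

lemma sep_eventually:
  assumes s: "s > 0" and inj: "\<forall>i\<in>{..<k}. \<forall>j\<in>{..<k}. i \<noteq> j \<longrightarrow> x i \<noteq> (x j :: 'd::euclidean_space)"
  shows "\<exists>n. sep s k n x"
proof -
  have "eventually (\<lambda>n. \<forall>i\<in>{..<k}. \<forall>j\<in>{..<k}. i \<noteq> j \<longrightarrow> qv s n (x i) \<noteq> qv s n (x j)) sequentially"
  proof (intro eventually_ball_finite ballI)
    fix i j assume "i \<in> {..<k}" "j \<in> {..<k}"
    show "eventually (\<lambda>n. i \<noteq> j \<longrightarrow> qv s n (x i) \<noteq> qv s n (x j)) sequentially"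
    proof (cases "i = j")
      case False
      then have "x i \<noteq> x j" using inj \<open>i \<in> {..<k}\<close> \<open>j \<in> {..<k}\<close> by blast
      from qv_eventually_diff[OF s this] show ?thesis by (rule eventually_mono) simp
    qed simp
  qed auto
  then obtain N where "\<forall>n\<ge>N. \<forall>i\<in>{..<k}. \<forall>j\<in>{..<k}. i \<noteq> j \<longrightarrow> qv s n (x i) \<noteq> qv s n (x j)"
    unfolding eventually_sequentially by blast
  then have "sep s k N x" unfolding sep_def by blast
  then show ?thesis by blast
qed

lemma Yset_cover:
  assumes s: "s > 0" and x: "x \<in> inj_set k"
  shows "\<exists>n. x \<in> Yset s k n"
proof -
  from x have xs: "x \<in> space (tuple_space k)" and inj: "\<forall>i\<in>{..<k}. \<forall>j\<in>{..<k}. i \<noteq> j \<longrightarrow> x i \<noteq> x j"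
    unfolding inj_set_def by auto
  obtain n where "sep s k n x" using sep_eventually[OF s inj] by blast
  define n0 where "n0 = (LEAST n. sep s k n x)"
  have "sep s k n0 x" unfolding n0_def by (rule LeastI) fact
  moreover have "\<not> sep s k m x" if "m < n0" for m using not_less_Least[OF that[unfolded n0_def]] .
  ultimately show ?thesis using xs unfolding Yset_def by auto
qed



lemma floor_bound:
  assumes "\<bar>t::real\<bar> \<le> C"
  shows "\<lfloor>t\<rfloor> \<in> {-(\<lceil>C\<rceil> + 1)..\<lceil>C\<rceil> + 1}"
proof -
  have f1: "of_int \<lfloor>t\<rfloor> \<le> t" by (rule of_int_floor_le)
  have f2: "t < of_int \<lfloor>t\<rfloor> + 1" by (rule real_of_int_floor_add_one_gt)
  have f3: "C \<le> of_int \<lceil>C\<rceil>" by (rule le_of_int_ceiling)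
  have t: "t \<le> C" "- t \<le> C" using assms by auto
  have "of_int \<lfloor>t\<rfloor> \<le> of_int \<lceil>C\<rceil> + (1::real)" using f1 f3 t by linarith
  moreover have "- of_int \<lceil>C\<rceil> - 1 < of_int \<lfloor>t\<rfloor> + (1::real)" using f2 f3 t by linarith
  ultimately have "of_int \<lfloor>t\<rfloor> \<le> of_int \<lceil>C\<rceil> + (1::real)" "- of_int \<lceil>C\<rceil> - 1 < of_int \<lfloor>t\<rfloor> + (1::real)" .
  then have "\<lfloor>t\<rfloor> \<le> \<lceil>C\<rceil> + 1" "- \<lceil>C\<rceil> - 1 < \<lfloor>t\<rfloor> + 1"
    by linarith+
  then show ?thesis by simp
qed

lemma qv_image_finite:
  assumes s: "s > 0" and W: "bounded W"
  shows "finite (qv s n ` (W::'d::euclidean_space set))"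
proof -
  obtain B where B: "\<forall>z\<in>W. norm z \<le> B" using W bounded_iff by blast
  define K where "K = \<lceil>B / sc s n\<rceil> + 1"
  have h: "sc s n > 0" using sc_pos[OF s] .
  have sub: "qv s n ` W \<subseteq> (\<lambda>a. \<Sum>b\<in>Basis. of_int (a b) *\<^sub>R b) ` PiE Basis (\<lambda>_. {-K..K})"
  proof
    fix y assume "y \<in> qv s n ` W"
    then obtain z where z: "z \<in> W" "y = qv s n z" by auto
    define a where "a = restrict (\<lambda>b. \<lfloor>(z \<bullet> b) / sc s n\<rfloor>) Basis"
    have ab: "\<lfloor>(z \<bullet> b) / sc s n\<rfloor> \<in> {-K..K}" if b: "b \<in> Basis" for b :: 'd
    proof -
      have "\<bar>z \<bullet> b\<bar> \<le> B" using Basis_le_norm[OF b, of z] B z(1) by auto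
      have "\<bar>(z \<bullet> b) / sc s n\<bar> = \<bar>z \<bullet> b\<bar> / sc s n" using h by (simp add: abs_divide)
      also have "\<dots> \<le> B / sc s n" by (rule divide_right_mono) (use \<open>\<bar>z \<bullet> b\<bar> \<le> B\<close> h in auto)
      finally show ?thesis unfolding K_def by (rule floor_bound)
    qed
    have "a \<in> PiE Basis (\<lambda>_. {-K..K})" unfolding a_def using ab by (simp add: restrict_PiE_iff)
    moreover have "y = (\<Sum>b\<in>Basis. of_int (a b) *\<^sub>R b)" unfolding z(2) qv_def a_def
      by (intro sum.cong refl) simp
    ultimately show "y \<in> (\<lambda>a. \<Sum>b\<in>Basis. of_int (a b) *\<^sub>R b) ` PiE Basis (\<lambda>_. {-K..K})" by blast
  qed
  have fin: "finite (PiE Basis (\<lambda>_::'d. {-K..K}))" by (intro finite_PiE) auto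
  show ?thesis by (rule finite_subset[OF sub finite_imageI[OF fin]])
qed



lemma sets_lam: "sets (PiM {..<k} (\<lambda>_. lborel::'d::euclidean_space measure)) = sets (tuple_space k)"
  unfolding tuple_space_def by (rule sets_PiM_cong) auto

lemma space_lam: "space (PiM {..<k} (\<lambda>_. lborel::'d::euclidean_space measure)) = space (tuple_space k)"
  unfolding tuple_space_def by (simp add: space_PiM)

lemma ecount_empty: "ecount {} = 0" by (simp add: ecount_def)

lemma fmm_mono: "C \<subseteq> D \<Longrightarrow> factorial_moment_measure M \<Phi> k C \<le> factorial_moment_measure M \<Phi> k D"
  unfolding factorial_moment_measure_def by (intro nn_integral_mono ecount_mono) auto

lemma Rset_sub_space: "Rset s k n c \<subseteq> space (tuple_space k)"
  unfolding Rset_def Yset_def by auto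

lemma fmm_Rset_le:
  fixes \<Phi> :: "'a \<Rightarrow> 'd::euclidean_space set"
  assumes wsp: "weakly_sub_poisson M \<Phi>"
    and mean: "\<forall>B\<in>sets borel. mean_measure M \<Phi> B = emeasure lborel B" and s: "s > 0"
  shows "factorial_moment_measure M \<Phi> k (Rset s k n c) \<le> emeasure (PiM {..<k} (\<lambda>_. lborel)) (Rset s k n c)"
proof (cases "Rset s k n c = {}")
  case True
  then show ?thesis by (simp add: factorial_moment_measure_def ecount_empty)
next
  case False
  then obtain x where x: "x \<in> Rset s k n c" by auto
  interpret product_sigma_finite "\<lambda>_::nat. lborel::'d measure" by standard
  define B where "B i = cube s n (c i)" for i
  have R: "Rset s k n c = PiE {..<k} B" unfolding B_def by (rule Rset_prod[OF s x])
  have Bs: "\<forall>i<k. B i \<in> sets borel \<and> bounded (B i)" unfolding B_def using cube_sets cube_bounded[OF s] by auto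
  have Bd: "disjoint_family_on B {..<k}"
    unfolding disjoint_family_on_def B_def
  proof (intro ballI impI)
    fix i j assume "i \<in> {..<k}" "j \<in> {..<k}" "i \<noteq> j"
    then have "c i \<noteq> c j" using Rset_distinct[OF x] by auto
    then show "cube s n (c i) \<inter> cube s n (c j) = {}" by (rule cube_disjoint)
  qed
  have "factorial_moment_measure M \<Phi> k (Rset s k n c) \<le> (\<Prod>i<k. mean_measure M \<Phi> (B i))"
    unfolding R using wsp Bs Bd unfolding weakly_sub_poisson_def by blast
  also have "\<dots> = (\<Prod>i<k. emeasure lborel (B i))" using mean Bs by (intro prod.cong) auto
  also have "\<dots> = emeasure (PiM {..<k} (\<lambda>_. lborel)) (PiE {..<k} B)"
    using Bs by (subst emeasure_PiM) auto
  finally show ?thesis unfolding R .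
qed


lemma cover_bound:
  fixes \<Phi> :: "'a \<Rightarrow> 'd::euclidean_space set" and W :: "'d set" and s :: real
  assumes spp: "simple_point_process M \<Phi>" and wsp: "weakly_sub_poisson M \<Phi>"
    and mean: "\<forall>B\<in>sets borel. mean_measure M \<Phi> B = emeasure lborel B"
    and C: "C \<in> sets (tuple_space k)" "C \<subseteq> PiE {..<k} (\<lambda>_. W)" and W: "bounded W" and s: "s > 0"
    and E: "E \<in> sets (tuple_space k)"
    and Esub: "\<And>x y. x \<in> C \<Longrightarrow> y \<in> space (tuple_space k) \<Longrightarrow> (\<forall>i<k. norm (y i - x i) \<le> real DIM('d) * s) \<Longrightarrow> y \<in> E"
  shows "factorial_moment_measure M \<Phi> k C \<le> emeasure (PiM {..<k} (\<lambda>_. lborel)) E"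
proof -
  define L where "L = PiM {..<k} (\<lambda>_. lborel::'d measure)"
  have setsL: "sets L = sets (tuple_space k)" unfolding L_def by (rule sets_lam)
  define G where "G n = {c \<in> PiE {..<k} (\<lambda>_. qv s n ` W). Rset s k n c \<inter> C \<noteq> {}}" for n
  have finG: "finite (G n)" for n
  proof -
    have "G n \<subseteq> PiE {..<k} (\<lambda>_. qv s n ` W)" unfolding G_def by auto
    moreover have "finite (PiE {..<k} (\<lambda>_. qv s n ` W))" using qv_image_finite[OF s W] by (intro finite_PiE) auto
    ultimately show ?thesis by (rule finite_subset)
  qed
  define f where "f n c \<omega> = ecount (distinct_tuples k (\<Phi> \<omega>) \<inter> Rset s k n c)" for n c \<omega>
  have fmeas: "f n c \<in> borel_measurable M" if "c \<in> G n" for n c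
  proof -
    from that obtain x where x: "x \<in> Rset s k n c" unfolding G_def by auto
    define V where "V = (\<Union>i<k. cube s n (c i))"
    have V: "bounded V" "V \<in> sets borel" unfolding V_def using cube_bounded[OF s] by (auto intro!: sets.finite_UN cube_sets)
    have "Rset s k n c \<subseteq> PiE {..<k} (\<lambda>_. V)" unfolding Rset_prod[OF s x] V_def by (auto simp: PiE_iff)
    then have "(\<lambda>\<omega>. ecount (distinct_tuples k (\<Phi> \<omega>) \<inter> Rset s k n c)) \<in> borel_measurable M"
      by (intro dt_meas[OF spp V Rset_sets])
    then show ?thesis unfolding f_def .
  qed
  have cover: "distinct_tuples k (\<Phi> \<omega>) \<inter> C \<subseteq> (\<Union>n. \<Union>c\<in>G n. distinct_tuples k (\<Phi> \<omega>) \<inter> Rset s k n c)" for \<omega>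
  proof
    fix x assume x: "x \<in> distinct_tuples k (\<Phi> \<omega>) \<inter> C"
    then have xi: "x \<in> inj_set k" by (simp add: distinct_tuples_eq)
    obtain n where n: "x \<in> Yset s k n" using Yset_cover[OF s xi] by blast
    define c where "c = restrict (\<lambda>i. qv s n (x i)) {..<k}"
    have xR: "x \<in> Rset s k n c" using n unfolding Rset_def c_def by auto
    have "x i \<in> W" if "i < k" for i using x C(2) that by (auto simp: PiE_iff)
    then have "c \<in> PiE {..<k} (\<lambda>_. qv s n ` W)" unfolding c_def by (auto simp: restrict_PiE_iff)
    then have "c \<in> G n" using x xR unfolding G_def by auto
    then show "x \<in> (\<Union>n. \<Union>c\<in>G n. distinct_tuples k (\<Phi> \<omega>) \<inter> Rset s k n c)" using xR x by blast
  qed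
  have step1: "ecount (distinct_tuples k (\<Phi> \<omega>) \<inter> C) \<le> (\<Sum>n. \<Sum>c\<in>G n. f n c \<omega>)" for \<omega>
  proof -
    have "ecount (distinct_tuples k (\<Phi> \<omega>) \<inter> C) \<le> ecount (\<Union>n. \<Union>c\<in>G n. distinct_tuples k (\<Phi> \<omega>) \<inter> Rset s k n c)"
      by (rule ecount_mono[OF cover])
    also have "\<dots> \<le> (\<Sum>n. ecount (\<Union>c\<in>G n. distinct_tuples k (\<Phi> \<omega>) \<inter> Rset s k n c))"
      unfolding ecount_eq by (rule emeasure_subadditive_countably) auto
    also have "\<dots> \<le> (\<Sum>n. \<Sum>c\<in>G n. f n c \<omega>)"
      unfolding f_def ecount_eq by (intro suminf_le summableI emeasure_subadditive_finite finG) auto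
    finally show ?thesis .
  qed
  have "factorial_moment_measure M \<Phi> k C \<le> (\<integral>\<^sup>+\<omega>. (\<Sum>n. \<Sum>c\<in>G n. f n c \<omega>) \<partial>M)"
    unfolding factorial_moment_measure_def by (intro nn_integral_mono step1)
  also have "\<dots> = (\<Sum>n. \<integral>\<^sup>+\<omega>. (\<Sum>c\<in>G n. f n c \<omega>) \<partial>M)"
    by (rule nn_integral_suminf) (intro borel_measurable_sum fmeas)
  also have "\<dots> = (\<Sum>n. \<Sum>c\<in>G n. \<integral>\<^sup>+\<omega>. f n c \<omega> \<partial>M)"
    by (intro suminf_cong nn_integral_sum fmeas)
  also have "\<dots> \<le> (\<Sum>n. \<Sum>c\<in>G n. emeasure L (Rset s k n c))"
  proof (intro suminf_le summableI sum_mono)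
    fix n c
    have "(\<integral>\<^sup>+\<omega>. f n c \<omega> \<partial>M) = factorial_moment_measure M \<Phi> k (Rset s k n c)"
      unfolding f_def factorial_moment_measure_def ..
    also have "\<dots> \<le> emeasure L (Rset s k n c)" unfolding L_def by (rule fmm_Rset_le[OF wsp mean s])
    finally show "(\<integral>\<^sup>+\<omega>. f n c \<omega> \<partial>M) \<le> emeasure L (Rset s k n c)" .
  qed
  also have "\<dots> = (\<Sum>n. emeasure L (\<Union>c\<in>G n. Rset s k n c))"
  proof (intro suminf_cong sum_emeasure finG)
    fix n
    show "Rset s k n ` G n \<subseteq> sets L" using Rset_sets setsL by auto
    show "disjoint_family_on (Rset s k n) (G n)"
      unfolding disjoint_family_on_def
    proof (intro ballI impI)
      fix c c' assume c: "c \<in> G n" "c' \<in> G n" "c \<noteq> c'"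
      show "Rset s k n c \<inter> Rset s k n c' = {}"
      proof (rule ccontr)
        assume "Rset s k n c \<inter> Rset s k n c' \<noteq> {}"
        then obtain x where "x \<in> Rset s k n c" "x \<in> Rset s k n c'" by auto
        then have "\<forall>i\<in>{..<k}. c i = c' i" unfolding Rset_def by auto
        moreover have "c \<in> PiE {..<k} (\<lambda>_. qv s n ` W)" "c' \<in> PiE {..<k} (\<lambda>_. qv s n ` W)"
          using c unfolding G_def by auto
        ultimately have "c = c'" using PiE_ext by metis
        then show False using c by simp
      qed
    qed
  qed
  also have "\<dots> = emeasure L (\<Union>n. \<Union>c\<in>G n. Rset s k n c)"
  proof (rule suminf_emeasure)
    show "range (\<lambda>n. \<Union>c\<in>G n. Rset s k n c) \<subseteq> sets L"
      using Rset_sets setsL finG by (auto intro!: sets.finite_UN)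
    show "disjoint_family (\<lambda>n. \<Union>c\<in>G n. Rset s k n c)"
      unfolding disjoint_family_on_def
    proof (intro ballI impI)
      fix n n' :: nat assume "n \<noteq> n'"
      have "(\<Union>c\<in>G n. Rset s k n c) \<subseteq> Yset s k n" "(\<Union>c\<in>G n'. Rset s k n' c) \<subseteq> Yset s k n'"
        unfolding Rset_def by auto
      then show "(\<Union>c\<in>G n. Rset s k n c) \<inter> (\<Union>c\<in>G n'. Rset s k n' c) = {}"
        using Yset_disj[OF \<open>n \<noteq> n'\<close>, of s k] by blast
    qed
  qed
  also have "\<dots> \<le> emeasure L E"
  proof (rule emeasure_mono)
    show "E \<in> sets L" using E setsL by simp
    show "(\<Union>n. \<Union>c\<in>G n. Rset s k n c) \<subseteq> E"
    proof safe
      fix n c y assume c: "c \<in> G n" and y: "y \<in> Rset s k n c"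
      from c obtain x where x: "x \<in> Rset s k n c" "x \<in> C" unfolding G_def by auto
      have "norm (y i - x i) \<le> real DIM('d) * s" if "i < k" for i
      proof -
        have "qv s n (y i) = qv s n (x i)" using x(1) y that unfolding Rset_def by auto
        then have "norm (y i - x i) \<le> DIM('d) * sc s n" by (rule qv_close[OF s])
        also have "\<dots> \<le> real DIM('d) * s" using sc_le[OF s] by (intro mult_left_mono) auto
        finally show ?thesis .
      qed
      moreover have "y \<in> space (tuple_space k)" using y Rset_sub_space by blast
      ultimately show "y \<in> E" using Esub[OF x(2)] by blast
    qed
  qed
  finally show ?thesis unfolding L_def .
qed



definition Ep :: "real \<Rightarrow> nat \<Rightarrow> (nat \<Rightarrow> 'd::euclidean_space) set" where
  "Ep \<rho> k = {y \<in> space (tuple_space (Suc k)). norm (y 0) \<le> \<rho> \<and> (\<forall>i\<in>{..<k}. dist (y (Suc i)) (y i) \<le> \<rho>)}"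

lemma Ep_sets: "Ep \<rho> k \<in> sets (tuple_space (Suc k))"
proof -
  note [measurable] = comp_meas[of 0 "Suc k"]
  have b: "Measurable.pred (PiM {..<Suc k} (\<lambda>_. borel)) (\<lambda>x. \<forall>i\<in>{..<k}. dist (x (Suc i)) (x i :: 'd::euclidean_space) \<le> \<rho>)"
  proof (rule pred_intros_finite(3), simp)
    fix i assume "i \<in> {..<k}"
    then have "i < Suc k" "Suc i < Suc k" by auto
    note [measurable] = comp_meas[OF this(1)] comp_meas[OF this(2)]
    show "Measurable.pred (PiM {..<Suc k} (\<lambda>_. borel)) (\<lambda>x. dist (x (Suc i)) (x i :: 'd) \<le> \<rho>)"
      by measurable
  qed
  have "Measurable.pred (PiM {..<Suc k} (\<lambda>_. borel)) (\<lambda>x. norm (x 0 :: 'd) \<le> \<rho> \<and> (\<forall>i\<in>{..<k}. dist (x (Suc i)) (x i :: 'd::euclidean_space) \<le> \<rho>))"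
    using b by measurable
  then show ?thesis unfolding Ep_def tuple_space_def pred_def .
qed


lemma Ep0: "Ep \<rho> 0 = PiE {..<Suc 0} (\<lambda>_. cball (0::'d::euclidean_space) \<rho>)"
proof (intro set_eqI)
  fix x :: "nat \<Rightarrow> 'd"
  show "x \<in> Ep \<rho> 0 \<longleftrightarrow> x \<in> PiE {..<Suc 0} (\<lambda>_. cball 0 \<rho>)"
    unfolding Ep_def space_tuple PiE_iff by (simp add: lessThan_Suc conj_ac)
qed
lemma Ep_upd:
  assumes xs: "x \<in> PiE {..<Suc k} (\<lambda>_. UNIV)"
  shows "x(Suc k := y) \<in> Ep \<rho> (Suc k) \<longleftrightarrow> x \<in> Ep \<rho> k \<and> dist y (x k :: 'd::euclidean_space) \<le> \<rho>"
proof
  assume a: "x(Suc k := y) \<in> Ep \<rho> (Suc k)"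
  then have n0: "norm (x 0) \<le> \<rho>" unfolding Ep_def by simp
  from a have st: "dist ((x(Suc k := y)) (Suc i)) ((x(Suc k := y)) i) \<le> \<rho>" if "i < Suc k" for i
    using that unfolding Ep_def by simp
  have "dist (x (Suc i)) (x i) \<le> \<rho>" if "i < k" for i using st[of i] that by simp
  moreover have "dist y (x k) \<le> \<rho>" using st[of k] by simp
  ultimately show "x \<in> Ep \<rho> k \<and> dist y (x k) \<le> \<rho>"
    using xs n0 unfolding Ep_def space_tuple by simp
next
  assume a: "x \<in> Ep \<rho> k \<and> dist y (x k) \<le> \<rho>"
  have "x(Suc k := y) \<in> PiE {..<Suc (Suc k)} (\<lambda>_. UNIV)" using xs by (auto simp: PiE_iff extensional_def)
  moreover have "dist ((x(Suc k := y)) (Suc i)) ((x(Suc k := y)) i) \<le> \<rho>" if "i < Suc k" for i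
  proof (cases "i = k")
    case True then show ?thesis using a by simp
  next
    case False then have "i < k" using that by simp
    then show ?thesis using a unfolding Ep_def by simp
  qed
  moreover have "norm ((x(Suc k := y)) 0) \<le> \<rho>" using a unfolding Ep_def by simp
  ultimately show "x(Suc k := y) \<in> Ep \<rho> (Suc k)" unfolding Ep_def space_tuple by simp
qed


lemma Ep_measure:
  assumes \<rho>: "\<rho> \<ge> 0"
  shows "emeasure (PiM {..<Suc k} (\<lambda>_. lborel)) (Ep \<rho> k :: (nat \<Rightarrow> 'd::euclidean_space) set)
     = ennreal (unit_ball_vol DIM('d) * \<rho> ^ DIM('d)) ^ Suc k"
proof (induction k)
  case 0
  interpret product_sigma_finite "\<lambda>_::nat. lborel::'d measure" by standard
  show ?case unfolding Ep0 by (subst emeasure_PiM) (auto simp: emeasure_cball[OF \<rho>])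
next
  case (Suc k)
  interpret product_sigma_finite "\<lambda>_::nat. lborel::'d measure" by standard
  let ?c = "ennreal (unit_ball_vol DIM('d) * \<rho> ^ DIM('d))"
  have ins: "{..<Suc (Suc k)} = insert (Suc k) {..<Suc k}" by auto
  have Es: "Ep \<rho> (Suc k) \<in> sets (PiM (insert (Suc k) {..<Suc k}) (\<lambda>_. lborel::'d measure))"
    unfolding ins[symmetric] sets_lam by (rule Ep_sets)
  have meas: "indicator (Ep \<rho> (Suc k)) \<in> borel_measurable (PiM (insert (Suc k) {..<Suc k}) (\<lambda>_. lborel::'d measure))"
    using Es by simp
  have "emeasure (PiM {..<Suc (Suc k)} (\<lambda>_. lborel)) (Ep \<rho> (Suc k) :: (nat \<Rightarrow> 'd) set)
      = (\<integral>\<^sup>+ x. indicator (Ep \<rho> (Suc k)) x \<partial>(PiM (insert (Suc k) {..<Suc k}) (\<lambda>_. lborel::'d measure)))"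
    using Es unfolding ins by simp
  also have "\<dots> = (\<integral>\<^sup>+ x. (\<integral>\<^sup>+ y. indicator (Ep \<rho> (Suc k)) (x(Suc k := y)) \<partial>lborel) \<partial>(PiM {..<Suc k} (\<lambda>_. lborel::'d measure)))"
    by (rule product_nn_integral_insert[OF _ _ meas]) auto
  also have "\<dots> = (\<integral>\<^sup>+ x. ?c * indicator (Ep \<rho> k) x \<partial>(PiM {..<Suc k} (\<lambda>_. lborel::'d measure)))"
  proof (rule nn_integral_cong)
    fix x :: "nat \<Rightarrow> 'd" assume x: "x \<in> space (PiM {..<Suc k} (\<lambda>_. lborel::'d measure))"
    then have xs: "x \<in> PiE {..<Suc k} (\<lambda>_. UNIV)" by (simp add: space_PiM)
    have eq: "indicator (Ep \<rho> (Suc k)) (x(Suc k := y)) = (indicator (Ep \<rho> k) x * indicator (cball (x k) \<rho>) y :: ennreal)" for y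
      using Ep_upd[OF xs, of y \<rho>] by (simp add: indicator_def dist_commute)
    have "(\<integral>\<^sup>+ y. indicator (Ep \<rho> (Suc k)) (x(Suc k := y)) \<partial>lborel) = (\<integral>\<^sup>+ y. indicator (Ep \<rho> k) x * indicator (cball (x k) \<rho>) y \<partial>lborel)"
      by (simp only: eq)
    also have "\<dots> = indicator (Ep \<rho> k) x * emeasure lborel (cball (x k) \<rho>)"
      by (rule nn_integral_cmult_indicator) simp
    also have "\<dots> = ?c * indicator (Ep \<rho> k) x" by (simp add: emeasure_cball[OF \<rho>] mult.commute)
    finally show "(\<integral>\<^sup>+ y. indicator (Ep \<rho> (Suc k)) (x(Suc k := y)) \<partial>lborel) = ?c * indicator (Ep \<rho> k) x" .
  qed
  also have "\<dots> = ?c * emeasure (PiM {..<Suc k} (\<lambda>_. lborel::'d measure)) (Ep \<rho> k)"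
    by (intro nn_integral_cmult_indicator) (unfold sets_lam, rule Ep_sets)
  also have "\<dots> = ?c ^ Suc (Suc k)" using Suc.IH by simp
  finally show ?case .
qed



lemma frontier_window_norm:
  assumes z: "z \<in> frontier (window m :: 'd::euclidean_space set)"
  shows "real m \<le> norm z"
proof -
  have z1: "z \<in> cbox (- (real m *\<^sub>R One)) (real m *\<^sub>R One)" "z \<notin> box (- (real m *\<^sub>R One)) (real m *\<^sub>R (One::'d))"
    using z unfolding window_def frontier_def by auto
  from z1(2) obtain b :: 'd where b: "b \<in> Basis" "\<not> (- real m < z \<bullet> b \<and> z \<bullet> b < real m)"
    unfolding mem_box by (auto simp: inner_minus_left)
  have "- real m \<le> z \<bullet> b" "z \<bullet> b \<le> real m" using z1(1) b(1) unfolding mem_box by (auto simp: inner_minus_left)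
  then have "real m \<le> \<bar>z \<bullet> b\<bar>" using b(2) by linarith
  also have "\<dots> \<le> norm z" by (rule Basis_le_norm[OF b(1)])
  finally show ?thesis .
qed

lemma path_norm_bound:
  assumes x: "x \<in> path_set m k r" and "i \<le> k"
  shows "norm (x i :: 'd::euclidean_space) \<le> (real i + 1) * r"
  using assms(2)
proof (induction i)
  case 0 then show ?case using x unfolding path_set_def by simp
next
  case (Suc i)
  then have "i < k" by simp
  then have "dist (x (Suc i)) (x i) \<le> r" using x unfolding path_set_def by simp
  then have "norm (x (Suc i)) \<le> norm (x i) + r" using norm_triangle_ineq2[of "x (Suc i)" "x i"]
    by (simp add: dist_norm)
  moreover have "norm (x i) \<le> (real i + 1) * r" using Suc by simp
  moreover have "(real i + 1) * r + r = (real (Suc i) + 1) * r" by (simp add: algebra_simps)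
  ultimately show ?case by linarith
qed

lemma path_nonempty_bound:
  assumes x: "x \<in> (path_set m k r :: (nat \<Rightarrow> 'd::euclidean_space) set)"
  shows "real m \<le> (real k + 2) * r"
proof -
  have "norm (x 0) \<le> r" using x unfolding path_set_def by simp
  then have r: "r \<ge> 0" using norm_ge_zero order_trans by blast
  have xk: "norm (x k) \<le> (real k + 1) * r" by (rule path_norm_bound[OF x]) simp
  have F: "closed (frontier (window m :: 'd set))" by simp
  have "(0::'d) \<in> window m" unfolding window_def by (auto simp: mem_box inner_minus_left)
  then have "window m \<noteq> ({} :: 'd set)" by blast
  moreover have "window m \<noteq> (UNIV :: 'd set)" using window_bounded not_bounded_UNIV by metis
  ultimately have Fne: "frontier (window m :: 'd set) \<noteq> {}" by (rule frontier_not_empty)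
  obtain z where z: "z \<in> frontier (window m)" "infdist (x k) (frontier (window m)) = dist (x k) z"
    using infdist_attains_inf[OF F Fne] by blast
  have "dist (x k) z \<le> r" using x z(2) unfolding path_set_def by simp
  have "real m \<le> norm z" by (rule frontier_window_norm[OF z(1)])
  also have "\<dots> \<le> norm (x k) + dist (x k) z" using norm_triangle_ineq2[of z "x k"] by (simp add: dist_norm norm_minus_commute)
  also have "\<dots> \<le> (real k + 1) * r + r" using xk \<open>dist (x k) z \<le> r\<close> by simp
  finally show ?thesis by (simp add: algebra_simps)
qed



lemma term_bound:
  fixes \<Phi> :: "'a \<Rightarrow> 'd::euclidean_space set" and r \<rho> :: real
  assumes spp: "simple_point_process M \<Phi>" and wsp: "weakly_sub_poisson M \<Phi>"
    and mean: "\<forall>B\<in>sets borel. mean_measure M \<Phi> B = emeasure lborel B"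
    and r: "r > 0" and r\<rho>: "r < \<rho>"
  shows "factorial_moment_measure M \<Phi> (Suc k) (path_set m k r) \<le> ennreal (unit_ball_vol DIM('d) * \<rho> ^ DIM('d)) ^ Suc k"
proof -
  define \<delta> where "\<delta> = (\<rho> - r) / 2"
  have \<delta>: "\<delta> > 0" using r\<rho> unfolding \<delta>_def by simp
  define s where "s = \<delta> / real DIM('d)"
  have s: "s > 0" using \<delta> unfolding s_def by simp
  have ds: "real DIM('d) * s = \<delta>" unfolding s_def by simp
  have "factorial_moment_measure M \<Phi> (Suc k) (path_set m k r) \<le> emeasure (PiM {..<Suc k} (\<lambda>_. lborel)) (Ep \<rho> k :: (nat \<Rightarrow> 'd) set)"
  proof (rule cover_bound[OF spp wsp mean path_set_sets path_set_sub window_bounded s Ep_sets])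
    fix x y :: "nat \<Rightarrow> 'd"
    assume x: "x \<in> path_set m k r" and y: "y \<in> space (tuple_space (Suc k))"
      and d: "\<forall>i<Suc k. norm (y i - x i) \<le> real DIM('d) * s"
    have d': "norm (y i - x i) \<le> \<delta>" if "i < Suc k" for i using d that ds by simp
    have x0: "norm (x 0) \<le> r" using x unfolding path_set_def by simp
    have "norm (y 0) \<le> norm (x 0) + norm (y 0 - x 0)" using norm_triangle_ineq[of "x 0" "y 0 - x 0"] by simp
    also have "\<dots> \<le> \<rho>" using x0 d'[of 0] \<delta>_def \<delta> by simp
    finally have y0: "norm (y 0) \<le> \<rho>" .
    have "dist (y (Suc i)) (y i) \<le> \<rho>" if i: "i \<in> {..<k}" for i
    proof -
      have "dist (y (Suc i)) (y i) \<le> dist (y (Suc i)) (x (Suc i)) + dist (x (Suc i)) (x i) + dist (x i) (y i)"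
        using dist_triangle[of "y (Suc i)" "y i" "x (Suc i)"] dist_triangle[of "x (Suc i)" "y i" "x i"] by linarith
      moreover have "dist (y (Suc i)) (x (Suc i)) \<le> \<delta>" using d'[of "Suc i"] i by (simp add: dist_norm)
      moreover have "dist (x i) (y i) \<le> \<delta>" using d'[of i] i by (simp add: dist_norm norm_minus_commute)
      moreover have "dist (x (Suc i)) (x i) \<le> r" using x i unfolding path_set_def by simp
      moreover have "2 * \<delta> = \<rho> - r" unfolding \<delta>_def by simp
      ultimately show ?thesis by linarith
    qed
    then show "y \<in> Ep \<rho> k" using y y0 unfolding Ep_def by simp
  qed
  also have "\<dots> = ennreal (unit_ball_vol DIM('d) * \<rho> ^ DIM('d)) ^ Suc k"
    by (rule Ep_measure) (use r r\<rho> in simp)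
  finally show ?thesis .
qed



lemma fmm_empty: "factorial_moment_measure M \<Phi> k {} = 0"
  by (simp add: factorial_moment_measure_def ecount_empty)

lemma liminf_zero:
  fixes \<Phi> :: "'a \<Rightarrow> 'd::euclidean_space set" and r :: real
  assumes spp: "simple_point_process M \<Phi>" and wsp: "weakly_sub_poisson M \<Phi>"
    and mean: "\<forall>B\<in>sets borel. mean_measure M \<Phi> B = emeasure lborel B"
    and r: "r > 0" and small: "unit_ball_vol DIM('d) * r ^ DIM('d) < 1"
  shows "\<not> (liminf (\<lambda>m. expected_paths M \<Phi> m r) > 0)"
proof -
  define \<theta> where "\<theta> = unit_ball_vol DIM('d)"
  define d where "d = DIM('d)"
  have d: "d > 0" unfolding d_def by simp
  have \<theta>: "\<theta> > 0" unfolding \<theta>_def by simp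
  define \<rho>0 where "\<rho>0 = root d (1 / \<theta>)"
  have \<rho>0: "\<rho>0 > 0" "\<rho>0 ^ d = 1 / \<theta>" unfolding \<rho>0_def using d \<theta> by auto
  have "r < \<rho>0"
  proof (rule ccontr)
    assume "\<not> r < \<rho>0"
    then have "\<rho>0 ^ d \<le> r ^ d" using \<rho>0 by (intro power_mono) auto
    then have "\<theta> * \<rho>0 ^ d \<le> \<theta> * r ^ d" using \<theta> by simp
    then show False using small \<rho>0 \<theta> unfolding \<theta>_def d_def by simp
  qed
  define \<rho> where "\<rho> = (r + \<rho>0) / 2"
  have r\<rho>: "r < \<rho>" "\<rho> < \<rho>0" using \<open>r < \<rho>0\<close> unfolding \<rho>_def by auto
  define q where "q = \<theta> * \<rho> ^ d"
  have q: "q > 0" "q < 1"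
  proof -
    show "q > 0" unfolding q_def using \<theta> r r\<rho> by simp
    have "\<rho> ^ d < \<rho>0 ^ d" using r\<rho> r d by (intro power_strict_mono) auto
    then show "q < 1" unfolding q_def using \<rho>0 \<theta> by (simp add: field_simps)
  qed
  define p where "p = sqrt q"
  have p: "p > 0" "p < 1" "p * p = q" unfolding p_def using q by (auto simp: real_sqrt_lt_1_iff)
  define N where "N m = nat \<lfloor>real m / r\<rfloor>" for m :: nat
  define c where "c = (\<Sum>k. p ^ Suc k)"
  have sp: "summable (\<lambda>k. p ^ Suc k)"
    using summable_geometric[of p] p by (simp add: summable_mult)
  have bnd: "factorial_moment_measure M \<Phi> (Suc k) (path_set m k r) \<le> ennreal (p ^ (N m - 1) * p ^ Suc k)" for m k
  proof (cases "path_set m k r = ({} :: (nat \<Rightarrow> 'd) set)")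
    case True then show ?thesis by (simp add: fmm_empty)
  next
    case False
    then obtain x :: "nat \<Rightarrow> 'd" where "x \<in> path_set m k r" by auto
    from path_nonempty_bound[OF this] have "real m \<le> (real k + 2) * r" .
    then have "real m / r \<le> real k + 2" using r by (simp add: divide_le_eq)
    then have "\<lfloor>real m / r\<rfloor> \<le> int k + 2" by linarith
    then have "N m \<le> k + 2" unfolding N_def by linarith
    then have Nk: "N m - 1 \<le> Suc k" by linarith
    have "factorial_moment_measure M \<Phi> (Suc k) (path_set m k r) \<le> ennreal (\<theta> * \<rho> ^ d) ^ Suc k"
      unfolding \<theta>_def d_def by (rule term_bound[OF spp wsp mean r r\<rho>(1)])
    also have "\<dots> = ennreal (q ^ Suc k)" unfolding q_def[symmetric] using q by (simp add: ennreal_power ennreal_mult'')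
    also have "q ^ Suc k = p ^ Suc k * p ^ Suc k" using p(3) by (metis power_mult_distrib)
    also have "p ^ Suc k * p ^ Suc k \<le> p ^ (N m - 1) * p ^ Suc k"
      using p Nk by (intro mult_right_mono power_decreasing) auto
    finally show ?thesis by (simp add: ennreal_leI)
  qed
  have EN: "expected_paths M \<Phi> m r \<le> ennreal (p ^ (N m - 1) * c)" for m
  proof -
    have "expected_paths M \<Phi> m r = (\<Sum>k. factorial_moment_measure M \<Phi> (Suc k) (path_set m k r))"
      by (rule expected_paths_eq[OF spp])
    also have "\<dots> \<le> (\<Sum>k. ennreal (p ^ (N m - 1) * p ^ Suc k))"
      by (intro suminf_le summableI bnd)
    also have "\<dots> = ennreal (\<Sum>k. p ^ (N m - 1) * p ^ Suc k)"
      using p sp by (intro suminf_ennreal2 summable_mult) auto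
    also have "(\<Sum>k. p ^ (N m - 1) * p ^ Suc k) = p ^ (N m - 1) * c"
      unfolding c_def using sp by (rule suminf_mult)
    finally show ?thesis .
  qed
  have Nlim: "filterlim (\<lambda>m. N m - 1) at_top sequentially"
  proof (subst filterlim_at_top, intro allI)
    fix Z :: nat
    show "eventually (\<lambda>m. Z \<le> N m - 1) sequentially"
    proof (rule eventually_sequentiallyI[of "nat \<lceil>(real Z + 2) * r\<rceil>"])
      fix m assume "nat \<lceil>(real Z + 2) * r\<rceil> \<le> m"
      then have "(real Z + 2) * r \<le> real m" by linarith
      then have "real Z + 2 \<le> real m / r" using r by (simp add: le_divide_eq)
      then have "int Z + 2 \<le> \<lfloor>real m / r\<rfloor>" by linarith
      then show "Z \<le> N m - 1" unfolding N_def by linarith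
    qed
  qed
  have "(\<lambda>m. p ^ (N m - 1)) \<longlonglongrightarrow> 0"
    using filterlim_compose[OF LIMSEQ_power_zero[of p] Nlim] p by (simp add: o_def)
  then have "(\<lambda>m. p ^ (N m - 1) * c) \<longlonglongrightarrow> 0 * c" by (intro tendsto_mult tendsto_const)
  then have lim: "(\<lambda>m. ennreal (p ^ (N m - 1) * c)) \<longlonglongrightarrow> ennreal 0" by (intro tendsto_ennrealI) simp
  have "liminf (\<lambda>m. expected_paths M \<Phi> m r) \<le> liminf (\<lambda>m. ennreal (p ^ (N m - 1) * c))"
    by (rule Liminf_mono, rule always_eventually, rule allI, rule EN)
  also have "\<dots> = ennreal 0" by (rule lim_imp_Liminf[OF trivial_limit_sequentially lim])
  finally show ?thesis by simp
qed



lemma part2: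
  fixes \<Phi> :: "'c \<Rightarrow> 'd::euclidean_space set"
  assumes spp: "simple_point_process M \<Phi>" and wsp: "weakly_sub_poisson M \<Phi>"
    and mean: "\<forall>B\<in>sets borel. mean_measure M \<Phi> B = emeasure lborel B"
  shows "ereal (measure lborel (ball (0::'d) 1)) * lower_crit_radius M \<Phi> ^ DIM('d) \<ge> 1"
proof -
  define \<theta> where "\<theta> = unit_ball_vol DIM('d)"
  define d where "d = DIM('d)"
  have d: "d > 0" unfolding d_def by simp
  have \<theta>: "\<theta> > 0" unfolding \<theta>_def by simp
  define \<rho>0 where "\<rho>0 = root d (1 / \<theta>)"
  have \<rho>0: "\<rho>0 > 0" "\<rho>0 ^ d = 1 / \<theta>" unfolding \<rho>0_def using d \<theta> by auto
  have vol: "measure lborel (ball (0::'d) 1) = \<theta>" unfolding \<theta>_def using content_ball[of 1 "0::'d"] by simp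
  have "ereal \<rho>0 \<le> x" if x: "x \<in> {ereal r | r. r > 0 \<and> liminf (\<lambda>m. expected_paths M \<Phi> m r) > 0}" for x
  proof -
    from x obtain r where r: "x = ereal r" "r > 0" "liminf (\<lambda>m. expected_paths M \<Phi> m r) > 0" by auto
    have "\<rho>0 \<le> r"
    proof (rule ccontr)
      assume "\<not> \<rho>0 \<le> r"
      then have "r ^ d < \<rho>0 ^ d" using r d by (intro power_strict_mono) auto
      then have "\<theta> * r ^ d < \<theta> * \<rho>0 ^ d" using \<theta> by simp
      then have "unit_ball_vol DIM('d) * r ^ DIM('d) < 1" using \<rho>0 \<theta> unfolding \<theta>_def d_def by simp
      from liminf_zero[OF spp wsp mean r(2) this] r(3) show False by simp
    qed
    then show ?thesis using r by simp
  qed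
  then have lcr: "ereal \<rho>0 \<le> lower_crit_radius M \<Phi>" unfolding lower_crit_radius_def by (rule Inf_greatest)
  show ?thesis
  proof (cases "lower_crit_radius M \<Phi>")
    case (real t)
    then have t: "\<rho>0 \<le> t" using lcr by simp
    then have "\<rho>0 ^ d \<le> t ^ d" using \<rho>0 by (intro power_mono) auto
    then have "1 \<le> \<theta> * t ^ d" using \<rho>0 \<theta> by (simp add: field_simps)
    then show ?thesis using real vol unfolding d_def by simp
  next
    case PInf
    then show ?thesis using vol \<theta> d unfolding d_def by simp
  next
    case MInf
    then show ?thesis using lcr by simp
  qed
qed


theorem proposition6p1:
  shows
   "(\<forall>(M1::'a measure) (\<Phi>1::'a \<Rightarrow> 'd::euclidean_space set) (M2::'b measure) (\<Phi>2::'b \<Rightarrow> 'd set).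
       simple_point_process M1 \<Phi>1 \<and> simple_point_process M2 \<Phi>2 \<and>
       sigma_finite_moments M1 \<Phi>1 \<and> sigma_finite_moments M2 \<Phi>2 \<and>
       (\<forall>k\<ge>1. \<forall>C\<in>sets (tuple_space k).
          factorial_moment_measure M1 \<Phi>1 k C \<le> factorial_moment_measure M2 \<Phi>2 k C)
       \<longrightarrow> lower_crit_radius M1 \<Phi>1 \<ge> lower_crit_radius M2 \<Phi>2)
    \<and>
    (\<forall>(M::'c measure) (\<Phi>::'c \<Rightarrow> 'd set).
       simple_point_process M \<Phi> \<and> stationary M \<Phi> \<and> weakly_sub_poisson M \<Phi> \<and>
       (\<forall>B\<in>sets borel. mean_measure M \<Phi> B = emeasure lborel B)
       \<longrightarrow> ereal (measure lborel (ball (0::'d) 1)) * lower_crit_radius M \<Phi> ^ DIM('d) \<ge> 1)"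
  proof (intro conjI allI impI)
  fix M1 :: "'a measure" and \<Phi>1 :: "'a \<Rightarrow> 'd::euclidean_space set" and M2 :: "'b measure" and \<Phi>2 :: "'b \<Rightarrow> 'd set"
  assume h: "simple_point_process M1 \<Phi>1 \<and> simple_point_process M2 \<Phi>2 \<and>
       sigma_finite_moments M1 \<Phi>1 \<and> sigma_finite_moments M2 \<Phi>2 \<and>
       (\<forall>k\<ge>1. \<forall>C\<in>sets (tuple_space k).
          factorial_moment_measure M1 \<Phi>1 k C \<le> factorial_moment_measure M2 \<Phi>2 k C)"
  then show "lower_crit_radius M1 \<Phi>1 \<ge> lower_crit_radius M2 \<Phi>2"
    using part1[of M1 \<Phi>1 M2 \<Phi>2] by blast
next
  fix M :: "'c measure" and \<Phi> :: "'c \<Rightarrow> 'd set"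
  assume h: "simple_point_process M \<Phi> \<and> stationary M \<Phi> \<and> weakly_sub_poisson M \<Phi> \<and>
       (\<forall>B\<in>sets borel. mean_measure M \<Phi> B = emeasure lborel B)"
  then show "ereal (measure lborel (ball (0::'d) 1)) * lower_crit_radius M \<Phi> ^ DIM('d) \<ge> 1"
    using part2[of M \<Phi>] by blast
qed

end
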